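(* Let $\kappa$ be strongly inaccessible and let $S\subseteq S^\kappa_{\mathrm{pr}}$ be stationary in $\kappa$ and non-reflecting. Then (1) $\mathrm{add}(\mathbf{nst}^{\mathrm{pr}}_\kappa)\le\mathfrak b_\kappa$, and (2) $\mathrm{add}(\mathbf{nst}^{\mathrm{pr}}_{\kappa,S})=\mathfrak b_\kappa$.
   Context: For a cardinal $\lambda$, $S^\lambda_{\mathrm{inc}}$ is the set of strongly inaccessible cardinals below $\lambda$. A set $S\subseteq\lambda$ is nowhere stationary if for every $\delta\le\lambda$ of uncountable cofinality, $S\cap\delta$ is nonstationary in $\delta$. $S\subseteq\kappa$ is non-reflecting if $S\cap\delta$ is nonstationary in $\delta$ for every $\delta<\kappa$ of uncountable cofinality. By induction on strongly inaccessible $\lambda$ one defines a forcing $\mathbb Q_\lambda$ and an ideal $\mathrm{id}(\mathbb Q_\lambda)$ on $2^\lambda$: $p\in\mathbb Q_\lambda$ iff $p\subseteq 2^{<\lambda}$ is closed under initial segments and there is a witness $(\tau,S,\langle N_\delta:\delta\in S\rangle)$ with: (i) $\tau$ is the trunk of $p$, the least node of $p$ having two immediate successors in $p$; (ii) if $\tau\trianglelefteq\eta\in p$ then $\eta^\frown0,\eta^\frown1\in p$; (iii) $S\subseteq S^\lambda_{\mathrm{inc}}$ is nowhere stationary; (iv) $N_\delta\in\mathrm{id}(\mathbb Q_\delta)$ for $\delta\in S$; (v) for limit $\delta<\lambda$ with $\delta\notin S$ and $\eta\in2^\delta$: $\eta\in p$ iff $\eta\restriction\sigma\in p$ for all $\sigma<\delta$;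 (vi) for $\delta\in S$ and $\eta\in 2^\delta$: $\eta\in p$ iff $\eta\restriction\sigma\in p$ for all $\sigma<\delta$ and $\eta\notin N_\delta$. The order is $q\le p$ iff $q\subseteq p$. $[p]$ is the set of $x\in 2^\lambda$ all of whose proper initial segments lie in $p$; for $\mathcal J\subseteq\mathbb Q_\lambda$, $\mathrm{set}_0(\mathcal J)=2^\lambda\setminus\bigcup_{p\in\mathcal J}[p]$. $A\in\mathrm{id}(\mathbb Q_\lambda)$ iff there are at most $\lambda$ predense sets $\mathcal J_i\subseteq\mathbb Q_\lambda$ with $A\subseteq\bigcup_i\mathrm{set}_0(\mathcal J_i)$. $\Pr(\lambda)$ means: there is a family $\{\Lambda_i:i<\lambda\}$ of maximal antichains of $\mathbb Q_\lambda$ such that no $p\in\mathbb Q_\lambda$ satisfies $[p]\subseteq\bigcap_{i<\lambda}\bigcup_{q\in\Lambda_i}[q]$; $S^\kappa_{\mathrm{pr}}=\{\lambda\in S^\kappa_{\mathrm{inc}}:\Pr(\lambda)\}$. $\mathbf{nst}^{\mathrm{pr}}_\kappa$ is the family of nowhere stationary subsets of $S^\kappa_{\mathrm{pr}}$, and $\mathbf{nst}^{\mathrm{pr}}_{\kappa,S}$ the family of nowhere stationary subsets of $S$, both ordered by $\subseteq^*$ (inclusion modulo a bounded subset of $\kappa$); the additivity of such a family is the least size of a subfamily having no $\subseteq^*$-upper bound in the family. $\mathfrak b_\kappa$ is the least size of a family $B\subseteq\kappa^\kappa$ with no $\le^*$-upper bound in $\kappa^\kappa$, where $f\le^*g$ means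 $f(i)\le g(i)$ for all but boundedly many $i<\kappa$. *)

theory Defs
  imports Main "HOL-Library.Countable_Set"
begin

text \<open>Ordinals below the strongly inaccessible cardinal kappa are the
elements of a type 'o of class wellorder whose order type is kappa (kappa itself is
represented by UNIV). An ordinal delta \<le> kappa is represented by the initial segment
{..<x} (delta = x) or UNIV (delta = kappa). A node of 2^{<lambda} of length alpha is
a pair (alpha, f) with f vanishing from alpha on; an element of 2^alpha is a function
vanishing from alpha on.\<close>

definition cofinal_in :: "'o::wellorder set \<Rightarrow> 'o set \<Rightarrow> bool" where
  "cofinal_in X D \<longleftrightarrow> X \<subseteq> D \<and> (\<forall>x\<in>D. \<exists>y\<in>X. x \<le> y)"

definition ord_closed_in :: "'o::wellorder set \<Rightarrow> 'o set \<Rightarrow> bool" where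
  "ord_closed_in X D \<longleftrightarrow>
     (\<forall>x\<in>D. (\<exists>y. y < x) \<and> (\<forall>y<x. \<exists>z\<in>X. y < z \<and> z < x) \<longrightarrow> x \<in> X)"

definition club_in :: "'o::wellorder set \<Rightarrow> 'o set \<Rightarrow> bool" where
  "club_in C D \<longleftrightarrow> C \<subseteq> D \<and> cofinal_in C D \<and> ord_closed_in C D"

definition stationary_in :: "'o::wellorder set \<Rightarrow> 'o set \<Rightarrow> bool" where
  "stationary_in T D \<longleftrightarrow> (\<forall>C. club_in C D \<longrightarrow> T \<inter> C \<noteq> {})"

definition uncountable_cof :: "'o::wellorder set \<Rightarrow> bool" where
  "uncountable_cof D \<longleftrightarrow> (\<forall>X. cofinal_in X D \<longrightarrow> uncountable X)"

text \<open>The ordinals \<le> delta, for delta given as an initial segment D.\<close>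
definition segs :: "'o::wellorder set \<Rightarrow> 'o set set" where
  "segs D = {{..<x} | x. x \<in> D} \<union> {D}"

definition nowhere_stationary :: "'o::wellorder set \<Rightarrow> 'o set \<Rightarrow> bool" where
  "nowhere_stationary S D \<longleftrightarrow> S \<subseteq> D \<and>
     (\<forall>E\<in>segs D. uncountable_cof E \<longrightarrow> \<not> stationary_in (S \<inter> E) E)"

definition non_reflecting :: "'o::wellorder set \<Rightarrow> bool" where
  "non_reflecting S \<longleftrightarrow>
     (\<forall>x. uncountable_cof {..<x} \<longrightarrow> \<not> stationary_in (S \<inter> {..<x}) {..<x})"

definition strongly_inaccessible :: "'o::wellorder set \<Rightarrow> bool" where
  "strongly_inaccessible D \<longleftrightarrow>
     uncountable D \<and>
     (\<forall>x\<in>D. (card_of {..<x}, card_of D) \<in> ordLess) \<and>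
     (\<forall>X. cofinal_in X D \<longrightarrow> (card_of X, card_of D) \<in> ordIso) \<and>
     (\<forall>x\<in>D. (card_of (Pow {..<x}), card_of D) \<in> ordLess)"

definition S_inc :: "'o::wellorder \<Rightarrow> 'o set" where
  "S_inc lam = {x. x < lam \<and> strongly_inaccessible {..<x}}"

type_synonym 'o node = "'o \<times> ('o \<Rightarrow> bool)"

definition vanish_from :: "('o::wellorder \<Rightarrow> bool) \<Rightarrow> 'o \<Rightarrow> bool" where
  "vanish_from f a \<longleftrightarrow> (\<forall>y. a \<le> y \<longrightarrow> \<not> f y)"

definition tree_nodes :: "'o::wellorder \<Rightarrow> 'o node set" where
  "tree_nodes lam = {eta. fst eta < lam \<and> vanish_from (snd eta) (fst eta)}"

definition branches :: "'o::wellorder \<Rightarrow> ('o \<Rightarrow> bool) set" where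
  "branches lam = {f. vanish_from f lam}"

definition restr :: "'o::wellorder node \<Rightarrow> 'o \<Rightarrow> 'o node" where
  "restr eta s = (s, \<lambda>y. if y < s then snd eta y else False)"

definition init_seg :: "'o::wellorder node \<Rightarrow> 'o node \<Rightarrow> bool" where
  "init_seg eta nu \<longleftrightarrow> fst eta \<le> fst nu \<and> restr nu (fst eta) = eta"

definition osucc :: "'o::wellorder \<Rightarrow> 'o" where
  "osucc a = (LEAST y. a < y)"

definition ext :: "'o::wellorder node \<Rightarrow> bool \<Rightarrow> 'o node" where
  "ext eta i = (osucc (fst eta), (snd eta)(fst eta := i))"

definition is_limit :: "'o::wellorder \<Rightarrow> bool" where
  "is_limit d \<longleftrightarrow> (\<exists>y. y < d) \<and> (\<forall>y<d. \<exists>z. y < z \<and> z < d)"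

text \<open>Q I lam is Q_lambda, given the ideals I delta = id(Q_delta) for delta < lambda.
  False/True play the role of 0/1.\<close>
definition Q :: "('o::wellorder \<Rightarrow> ('o \<Rightarrow> bool) set set) \<Rightarrow> 'o \<Rightarrow> 'o node set set" where
  "Q I lam = {p. p \<subseteq> tree_nodes lam \<and>
     (\<forall>nu\<in>p. \<forall>s\<le>fst nu. restr nu s \<in> p) \<and>
     (\<exists>tau S N.
        (tau \<in> p \<and> ext tau False \<in> p \<and> ext tau True \<in> p \<and>
         (\<forall>nu\<in>p. ext nu False \<in> p \<and> ext nu True \<in> p \<longrightarrow> init_seg tau nu)) \<and>
        (\<forall>eta\<in>p. init_seg tau eta \<longrightarrow> ext eta False \<in> p \<and> ext eta True \<in> p) \<and>
        S \<subseteq> S_inc lam \<and> nowhere_stationary S {..<lam} \<and>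
        (\<forall>d\<in>S. N d \<in> I d) \<and>
        (\<forall>d<lam. is_limit d \<and> d \<notin> S \<longrightarrow>
           (\<forall>f. vanish_from f d \<longrightarrow> ((d, f) \<in> p \<longleftrightarrow> (\<forall>s<d. restr (d, f) s \<in> p)))) \<and>
        (\<forall>d\<in>S. \<forall>f. vanish_from f d \<longrightarrow>
           ((d, f) \<in> p \<longleftrightarrow> (\<forall>s<d. restr (d, f) s \<in> p) \<and> f \<notin> N d)))}"

definition body :: "'o::wellorder \<Rightarrow> 'o node set \<Rightarrow> ('o \<Rightarrow> bool) set" where
  "body lam p = {f \<in> branches lam. \<forall>a<lam. restr (a, f) a \<in> p}"

definition compatible :: "'a set set \<Rightarrow> 'a set \<Rightarrow> 'a set \<Rightarrow> bool" where
  "compatible P p q \<longleftrightarrow> (\<exists>r\<in>P. r \<subseteq> p \<and> r \<subseteq> q)"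

definition predense :: "'a set set \<Rightarrow> 'a set set \<Rightarrow> bool" where
  "predense P J \<longleftrightarrow> J \<subseteq> P \<and> (\<forall>p\<in>P. \<exists>q\<in>J. compatible P p q)"

definition set0 :: "'o::wellorder \<Rightarrow> 'o node set set \<Rightarrow> ('o \<Rightarrow> bool) set" where
  "set0 lam J = branches lam - (\<Union>q\<in>J. body lam q)"

definition idQ_step :: "('o::wellorder \<Rightarrow> ('o \<Rightarrow> bool) set set) \<Rightarrow> 'o \<Rightarrow> ('o \<Rightarrow> bool) set set" where
  "idQ_step I lam = {A. A \<subseteq> branches lam \<and>
     (\<exists>Js. (\<forall>i<lam. predense (Q I lam) (Js i)) \<and> A \<subseteq> (\<Union>i\<in>{..<lam}. set0 lam (Js i)))}"

definition idQ :: "'o::wellorder \<Rightarrow> ('o \<Rightarrow> bool) set set" where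
  "idQ = wfrec {(x, y). x < y} idQ_step"

definition QQ :: "'o::wellorder \<Rightarrow> 'o node set set" where
  "QQ lam = Q idQ lam"

definition max_antichain :: "'a set set \<Rightarrow> 'a set set \<Rightarrow> bool" where
  "max_antichain P A \<longleftrightarrow> A \<subseteq> P \<and>
     (\<forall>p\<in>A. \<forall>q\<in>A. p \<noteq> q \<longrightarrow> \<not> compatible P p q) \<and>
     (\<forall>p\<in>P. \<exists>q\<in>A. compatible P p q)"

definition Pr :: "'o::wellorder \<Rightarrow> bool" where
  "Pr lam \<longleftrightarrow> (\<exists>L. (\<forall>i<lam. max_antichain (QQ lam) (L i)) \<and>
     \<not> (\<exists>p\<in>QQ lam. body lam p \<subseteq> (\<Inter>i\<in>{..<lam}. \<Union>q\<in>L i. body lam q)))"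

definition S_pr :: "'o::wellorder set" where
  "S_pr = {lam. strongly_inaccessible {..<lam} \<and> Pr lam}"

definition nst_pr :: "'o::wellorder set set" where
  "nst_pr = {A. A \<subseteq> S_pr \<and> nowhere_stationary A UNIV}"

definition nst_S :: "'o::wellorder set \<Rightarrow> 'o set set" where
  "nst_S S = {A. A \<subseteq> S \<and> nowhere_stationary A UNIV}"

definition subseteq_star :: "'o::wellorder set \<Rightarrow> 'o set \<Rightarrow> bool" where
  "subseteq_star A B \<longleftrightarrow> (\<exists>x. \<forall>y\<in>A - B. y < x)"

definition unbounded_subfamily :: "'o::wellorder set set \<Rightarrow> 'o set set \<Rightarrow> bool" where
  "unbounded_subfamily fam F \<longleftrightarrow> F \<subseteq> fam \<and> \<not> (\<exists>B\<in>fam. \<forall>A\<in>F. subseteq_star A B)"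

definition le_star :: "('o::wellorder \<Rightarrow> 'o) \<Rightarrow> ('o \<Rightarrow> 'o) \<Rightarrow> bool" where
  "le_star f g \<longleftrightarrow> (\<exists>x. \<forall>i. x \<le> i \<longrightarrow> f i \<le> g i)"

definition b_unbounded :: "('o::wellorder \<Rightarrow> 'o) set \<Rightarrow> bool" where
  "b_unbounded B \<longleftrightarrow> \<not> (\<exists>g. \<forall>f\<in>B. le_star f g)"

text \<open>add(fam) \<le> b_kappa and b_kappa \<le> add(fam), as comparisons of least sizes.\<close>
definition add_le_b :: "'o::wellorder set set \<Rightarrow> bool" where
  "add_le_b fam \<longleftrightarrow> (\<forall>B::('o \<Rightarrow> 'o) set. b_unbounded B \<longrightarrow>
     (\<exists>F. unbounded_subfamily fam F \<and> (card_of F, card_of B) \<in> ordLeq))"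

definition b_le_add :: "'o::wellorder set set \<Rightarrow> bool" where
  "b_le_add fam \<longleftrightarrow> (\<forall>F. unbounded_subfamily fam F \<longrightarrow>
     (\<exists>B::('o \<Rightarrow> 'o) set. b_unbounded B \<and> (card_of B, card_of F) \<in> ordLeq))"

end

theory Submission
  imports Defs
begin

lemma si_regular:
  assumes "strongly_inaccessible (UNIV :: 'o::wellorder set)" "cofinal_in X (UNIV::'o set)"
  shows "(card_of X, card_of (UNIV::'o set)) \<in> ordIso"
  using assms unfolding strongly_inaccessible_def by blast

lemma si_countable_less:
  assumes "strongly_inaccessible (UNIV :: 'o::wellorder set)" "countable (X::'o set)"
  shows "(card_of X, card_of (UNIV::'o set)) \<in> ordLess"
proof (rule ccontr)
  assume "(card_of X, card_of (UNIV::'o set)) \<notin> ordLess"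
  hence "(card_of (UNIV::'o set), card_of X) \<in> ordLeq"
    by (rule iffD1[OF not_ordLess_iff_ordLeq[OF card_of_Well_order card_of_Well_order]])
  then obtain f where f: "inj_on f (UNIV::'o set)" "f ` UNIV \<subseteq> X"
    using card_of_ordLeq[THEN iffD2] by metis
  have "countable (f ` UNIV)" using f(2) assms(2) by (rule countable_subset)
  hence "countable (UNIV::'o set)" using f(1) by (rule countable_image_inj_on)
  thus False using assms(1) unfolding strongly_inaccessible_def by (simp only:)
qed

lemma small_bounded:
  assumes "strongly_inaccessible (UNIV :: 'o::wellorder set)"
    "(card_of (X::'o set), card_of (UNIV::'o set)) \<in> ordLess"
  shows "\<exists>y. \<forall>x\<in>X. x < y"
proof (rule ccontr)
  assume "\<not> ?thesis"
  hence "cofinal_in X UNIV" unfolding cofinal_in_def by (auto simp: not_less)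
  hence "(card_of X, card_of (UNIV::'o set)) \<in> ordIso" by (rule si_regular[OF assms(1)])
  thus False by (rule notE[OF not_ordLess_ordIso[OF assms(2)]])
qed

lemma countable_bounded:
  assumes "strongly_inaccessible (UNIV :: 'o::wellorder set)" "countable (X::'o set)"
  shows "\<exists>y. \<forall>x\<in>X. x < y"
  by (rule small_bounded[OF assms(1) si_countable_less[OF assms]])

lemma no_max:
  assumes "strongly_inaccessible (UNIV :: 'o::wellorder set)"
  shows "\<exists>y. (x::'o) < y"
  using countable_bounded[OF assms, of "{x}"] by auto

lemma seg_bounded:
  assumes "strongly_inaccessible (UNIV :: 'o::wellorder set)"
  shows "\<exists>y. \<forall>a\<le>(b::'o). (f a::'o) < y"
proof -
  obtain y0 where y0: "b < y0" using no_max[OF assms] by blast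
  have "{..b} \<subseteq> {..<y0}" using y0 by auto
  hence "(card_of (f ` {..b}), card_of {..<y0}) \<in> ordLeq"
    using card_of_image card_of_mono1 ordLeq_transitive by blast
  moreover have "(card_of {..<y0}, card_of (UNIV::'o set)) \<in> ordLess"
    using assms unfolding strongly_inaccessible_def by blast
  ultimately have "(card_of (f ` {..b}), card_of (UNIV::'o set)) \<in> ordLess"
    using ordLeq_ordLess_trans by blast
  then obtain y where "\<forall>x\<in>f ` {..b}. x < y" using small_bounded assms by blast
  thus ?thesis by auto
qed

definition clo :: "('o::wellorder \<Rightarrow> 'o) \<Rightarrow> 'o set" where
  "clo f = {g. \<forall>a<g. f a < g}"

lemma clo_club:
  assumes si: "strongly_inaccessible (UNIV :: 'o::wellorder set)"
  shows "club_in (clo (f::'o \<Rightarrow> 'o)) UNIV"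
proof -
  have closed: "ord_closed_in (clo f) UNIV"
    unfolding ord_closed_in_def clo_def
  proof (intro ballI impI)
    fix x assume h: "(\<exists>y. y < x) \<and> (\<forall>y<x. \<exists>z\<in>{g. \<forall>a<g. f a < g}. y < z \<and> z < x)"
    show "x \<in> {g. \<forall>a<g. f a < g}"
    proof (intro CollectI allI impI)
      fix a assume "a < x"
      then obtain z where "z \<in> {g. \<forall>a<g. f a < g}" "a < z" "z < x" using h by blast
      thus "f a < x" by auto
    qed
  qed
  have cof: "\<exists>g\<in>clo f. x \<le> g" for x
  proof -
    define h where "h b = (SOME y. b < y \<and> (\<forall>a\<le>b. f a < y))" for b
    have hp: "b < h b \<and> (\<forall>a\<le>b. f a < h b)" for b
    proof -
      obtain y1 where "\<forall>a\<le>b. f a < y1" using seg_bounded[OF si] by blast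
      obtain y2 where "b < y2" using no_max[OF si] by blast
      have "b < max y1 y2 \<and> (\<forall>a\<le>b. f a < max y1 y2)"
        using \<open>\<forall>a\<le>b. f a < y1\<close> \<open>b < y2\<close> by (auto simp: less_max_iff_disj)
      thus ?thesis unfolding h_def by (rule someI)
    qed
    define al where "al n = (h ^^ n) x" for n
    obtain y where y: "\<forall>z\<in>range al. z < y"
      using countable_bounded[OF si, of "range al"] by blast
    define g where "g = (LEAST y. \<forall>z\<in>range al. z < y)"
    have gp: "\<forall>z\<in>range al. z < g" unfolding g_def using y by (rule LeastI)
    have "al 0 < g" using gp by blast
    hence "x \<le> g" by (simp add: al_def)
    moreover have "g \<in> clo f" unfolding clo_def
    proof (intro CollectI allI impI)
      fix a assume "a < g"
      hence "\<not> (\<forall>z\<in>range al. z < a)" unfolding g_def using not_less_Least by blast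
      then obtain n where "a \<le> al n" by (auto simp: not_less)
      hence "f a < h (al n)" using hp by blast
      also have "h (al n) = al (Suc n)" by (simp add: al_def)
      also have "\<dots> < g" using gp by blast
      finally show "f a < g" .
    qed
    ultimately show ?thesis by blast
  qed
  show ?thesis unfolding club_in_def cofinal_in_def using closed cof by blast
qed

lemma stationary_mono:
  "stationary_in T D \<Longrightarrow> T \<subseteq> T' \<Longrightarrow> stationary_in T' D"
  unfolding stationary_in_def by blast

lemma uncountable_cof_UNIV:
  assumes si: "strongly_inaccessible (UNIV :: 'o::wellorder set)"
  shows "uncountable_cof (UNIV::'o set)"
  unfolding uncountable_cof_def
proof (intro allI impI)
  fix X :: "'o set" assume "cofinal_in X UNIV"
  hence i: "(card_of X, card_of (UNIV::'o set)) \<in> ordIso" by (rule si_regular[OF si])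
  show "uncountable X"
  proof
    assume "countable X"
    from not_ordLess_ordIso[OF si_countable_less[OF si this]] i show False by (rule notE)
  qed
qed

lemma nst_club:
  assumes si: "strongly_inaccessible (UNIV :: 'o::wellorder set)"
    and "nowhere_stationary (A::'o set) UNIV"
  shows "\<exists>C. club_in C UNIV \<and> A \<inter> C = {}"
proof -
  have "UNIV \<in> segs (UNIV::'o set)" unfolding segs_def by blast
  hence "\<not> stationary_in A UNIV" using assms uncountable_cof_UNIV[OF si]
    unfolding nowhere_stationary_def by auto
  thus ?thesis unfolding stationary_in_def by blast
qed

lemma nst_mem:
  assumes "non_reflecting S" "A \<subseteq> S" "club_in C UNIV" "A \<inter> C = {}"
  shows "nowhere_stationary (A::'o::wellorder set) UNIV"
  unfolding nowhere_stationary_def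
proof (intro conjI ballI impI)
  fix E assume E: "E \<in> segs (UNIV::'o set)" "uncountable_cof E"
  show "\<not> stationary_in (A \<inter> E) E"
  proof (cases "E = UNIV")
    case True
    thus ?thesis using assms(3,4) unfolding stationary_in_def by auto
  next
    case False
    then obtain x where x: "E = {..<x}" using E(1) unfolding segs_def by blast
    have "\<not> stationary_in (S \<inter> {..<x}) {..<x}" using assms(1) E(2) x
      unfolding non_reflecting_def by blast
    thus ?thesis using x assms(2) stationary_mono[of "A \<inter> E" E "S \<inter> {..<x}"] by blast
  qed
qed simp

lemma club_tail:
  assumes si: "strongly_inaccessible (UNIV :: 'o::wellorder set)"
    and C: "club_in C UNIV"
  shows "club_in (C \<inter> {y. x < y}) (UNIV::'o set)"
proof -
  have cof: "\<exists>y\<in>C \<inter> {y. x < y}. z \<le> y" for z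
  proof -
    obtain w where w: "max z x < w" using no_max[OF si] by blast
    obtain y where "y \<in> C" "w \<le> y" using C unfolding club_in_def cofinal_in_def by blast
    moreover have "x < y" "z \<le> y" using w \<open>w \<le> y\<close> by auto
    ultimately show ?thesis by blast
  qed
  have cl: "ord_closed_in (C \<inter> {y. x < y}) UNIV"
    unfolding ord_closed_in_def
  proof (intro ballI impI)
    fix g :: 'o assume h: "(\<exists>y. y < g) \<and> (\<forall>y<g. \<exists>z\<in>C \<inter> {y. x < y}. y < z \<and> z < g)"
    hence "g \<in> C" using C unfolding club_in_def ord_closed_in_def by blast
    moreover obtain y where "y < g" using h by blast
    then obtain z where "z \<in> C \<inter> {y. x < y}" "z < g" using h by blast
    ultimately show "g \<in> C \<inter> {y. x < y}" by auto
  qed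
  show ?thesis unfolding club_in_def cofinal_in_def using cof cl by blast
qed

lemma main_A:
  assumes si: "strongly_inaccessible (UNIV :: 'o::wellorder set)"
    and st: "stationary_in S (UNIV::'o set)"
    and fam: "\<forall>A\<in>fam. nowhere_stationary A UNIV"
    and memb: "\<And>f. S - clo f \<in> fam"
  shows "add_le_b fam"
  unfolding add_le_b_def
proof (intro allI impI)
  fix B :: "('o \<Rightarrow> 'o) set" assume Bu: "b_unbounded B"
  define F where "F = (\<lambda>f. S - clo f) ` B"
  have card: "(card_of F, card_of B) \<in> ordLeq" unfolding F_def by (rule card_of_image)
  have "unbounded_subfamily fam F"
    unfolding unbounded_subfamily_def
  proof (intro conjI notI)
    show "F \<subseteq> fam" unfolding F_def using memb by blast
  next
    assume "\<exists>B'\<in>fam. \<forall>A\<in>F. subseteq_star A B'"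
    then obtain B' where B': "B' \<in> fam" "\<forall>A\<in>F. subseteq_star A B'" by blast
    obtain D where D: "club_in D UNIV" "B' \<inter> D = {}" using nst_club[OF si] fam B' by blast
    have ex: "\<exists>g. g \<in> S \<and> g \<in> D \<and> x < g" for x
      using st club_tail[OF si D(1), of x] unfolding stationary_in_def by blast
    define g where "g x = (SOME g. g \<in> S \<and> g \<in> D \<and> x < g)" for x
    have gp: "g x \<in> S \<and> g x \<in> D \<and> x < g x" for x
      unfolding g_def using ex by (rule someI_ex)
    have "\<forall>f\<in>B. le_star f g"
    proof
      fix f assume "f \<in> B"
      hence "subseteq_star (S - clo f) B'" using B' F_def by blast
      then obtain x where x: "\<forall>y\<in>(S - clo f) - B'. y < x" unfolding subseteq_star_def by blast
      have "f i \<le> g i" if "x \<le> i" for i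
      proof -
        have "g i \<notin> B'" using gp D(2) by blast
        moreover have "\<not> g i < x" using gp[of i] that by auto
        ultimately have "g i \<in> clo f" using x gp[of i] by blast
        thus ?thesis using gp[of i] unfolding clo_def by auto
      qed
      thus "le_star f g" unfolding le_star_def by blast
    qed
    thus False using Bu unfolding b_unbounded_def by blast
  qed
  thus "\<exists>F. unbounded_subfamily fam F \<and> (card_of F, card_of B) \<in> ordLeq" using card by blast
qed

lemma main_B:
  assumes si: "strongly_inaccessible (UNIV :: 'o::wellorder set)"
    and nr: "non_reflecting S"
  shows "b_le_add (nst_S (S::'o set))"
  unfolding b_le_add_def
proof (intro allI impI)
  fix F assume Fu: "unbounded_subfamily (nst_S S) F"
  have Fsub: "\<And>A. A \<in> F \<Longrightarrow> A \<subseteq> S \<and> nowhere_stationary A UNIV"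
    using Fu unfolding unbounded_subfamily_def nst_S_def by blast
  define CA where "CA A = (SOME C. club_in C UNIV \<and> A \<inter> C = {})" for A :: "'o set"
  have CAp: "club_in (CA A) UNIV \<and> A \<inter> CA A = {}" if "A \<in> F" for A
  proof -
    have "\<exists>C. club_in C UNIV \<and> A \<inter> C = {}" using nst_club[OF si] Fsub[OF that] by blast
    thus ?thesis unfolding CA_def by (rule someI_ex)
  qed
  define fA where "fA A x = (SOME y. y \<in> CA A \<and> x < y)" for A x
  have fAp: "fA A x \<in> CA A \<and> x < fA A x" if "A \<in> F" for A x
  proof -
    have "\<exists>y. y \<in> CA A \<and> x < y"
      using club_tail[OF si, of "CA A" x] CAp[OF that] unfolding club_in_def cofinal_in_def
      by blast
    thus ?thesis unfolding fA_def by (rule someI_ex)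
  qed
  define B where "B = fA ` F"
  have card: "(card_of B, card_of F) \<in> ordLeq" unfolding B_def by (rule card_of_image)
  have "b_unbounded B" unfolding b_unbounded_def
  proof
    assume "\<exists>g. \<forall>f\<in>B. le_star f g"
    then obtain g where g: "\<forall>f\<in>B. le_star f g" by blast
    define B' where "B' = S - clo g"
    have "B' \<in> nst_S S" unfolding nst_S_def
      using nst_mem[OF nr, of B' "clo g"] clo_club[OF si] B'_def by blast
    moreover have "\<forall>A\<in>F. subseteq_star A B'"
    proof
      fix A assume A: "A \<in> F"
      then obtain x where x: "\<forall>i. x \<le> i \<longrightarrow> fA A i \<le> g i"
        using g B_def unfolding le_star_def by blast
      obtain x' where x': "x < x'" using no_max[OF si] by blast
      have "y < x'" if y: "y \<in> A - B'" for y
      proof (rule ccontr)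
        assume "\<not> y < x'"
        hence xy: "x < y" using x' by auto
        have yc: "y \<in> clo g" using y Fsub[OF A] B'_def by blast
        have "y \<in> CA A"
          using CAp[OF A] unfolding club_in_def ord_closed_in_def
        proof (elim conjE)
          assume cl: "\<forall>xa\<in>UNIV. (\<exists>y. y < xa) \<and> (\<forall>ya<xa. \<exists>z\<in>CA A. ya < z \<and> z < xa) \<longrightarrow> xa \<in> CA A"
          have "\<forall>ya<y. \<exists>z\<in>CA A. ya < z \<and> z < y"
          proof (intro allI impI)
            fix ya assume "ya < y"
            let ?m = "max ya x"
            have "?m < y" using \<open>ya < y\<close> xy by simp
            have "fA A ?m \<in> CA A" "?m < fA A ?m" using fAp[OF A] by blast+
            moreover have "fA A ?m \<le> g ?m" using x by simp
            moreover have "g ?m < y" using yc \<open>?m < y\<close> unfolding clo_def by blast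
            ultimately show "\<exists>z\<in>CA A. ya < z \<and> z < y" by (auto simp: max_less_iff_conj)
          qed
          thus "y \<in> CA A" using cl xy by blast
        qed
        thus False using CAp[OF A] y by blast
      qed
      thus "subseteq_star A B'" unfolding subseteq_star_def by blast
    qed
    ultimately show False using Fu unfolding unbounded_subfamily_def by blast
  qed
  thus "\<exists>B::('o \<Rightarrow> 'o) set. b_unbounded B \<and> (card_of B, card_of F) \<in> ordLeq"
    using card by blast
qed

theorem theorem5p13:
  fixes S :: "'o::wellorder set"
  assumes "strongly_inaccessible (UNIV :: 'o set)"
    and "S \<subseteq> S_pr"
    and "stationary_in S UNIV"
    and "non_reflecting S"
  shows "add_le_b (nst_pr :: 'o set set) \<and>
         (add_le_b (nst_S S) \<and> b_le_add (nst_S S))"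
proof (intro conjI)
  have mem: "nowhere_stationary (S - clo f) UNIV" for f
    using nst_mem[OF assms(4), of "S - clo f" "clo f"] clo_club[OF assms(1)] by blast
  show "add_le_b (nst_pr :: 'o set set)"
    by (rule main_A[OF assms(1) assms(3)]) (use mem assms(2) in \<open>auto simp: nst_pr_def\<close>)
  show "add_le_b (nst_S S)"
    by (rule main_A[OF assms(1) assms(3)]) (use mem in \<open>auto simp: nst_S_def\<close>)
  show "b_le_add (nst_S S)" by (rule main_B[OF assms(1) assms(4)])
qed

end
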